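(* Let $I$ be a finite tree. An expression $\Sigma_{i_1}\Sigma_{i_2}\cdots\Sigma_{i_r}$ for a morphism of $R_0(I)$ is reduced if and only if between any two occurrences of the same letter $i$ in the word $i_1i_2\cdots i_r$ there is an occurrence of some $j$ adjacent to $i$ in $I$.
   Context: Let $I$ be a finite tree. $\mathrm{Quiv}(I)$ is the set of orientations of $I$. For $\Gamma\in\mathrm{Quiv}(I)$ and a source or sink $i$ of $\Gamma$, $s_i\Gamma$ is the orientation obtained by reversing all arrows at $i$. The groupoid $R_0(I)$ has object set $\mathrm{Quiv}(I)$ and is generated by elementary isomorphisms $\Sigma_i:\Gamma\to s_i\Gamma$ (for each $\Gamma$ and each source or sink $i$ of $\Gamma$) subject to the relations, whenever both sides are defined: (R1) $\Sigma_i^2=1$; (R2) $\Sigma_i\Sigma_j=\Sigma_j\Sigma_i$ when $i,j$ are not adjacent. Composition is right-to-left. An expression for a morphism $\Sigma:\Gamma\to\Gamma'$ is a composable word $\Sigma_{i_1}\cdots\Sigma_{i_r}$ equal to $\Sigma$ (so $i_r$ is a source or sink of $\Gamma$, $i_{r-1}$ a source or sink of $s_{i_r}\Gamma$, etc.). The length $\ell(\Sigma)$ is the minimal length of an expression for $\Sigma$, and an expression of length $\ell(\Sigma)$ is called reduced. *)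

theory Defs
  imports Main
begin

definition is_cycle :: "'v set \<Rightarrow> ('v \<Rightarrow> 'v \<Rightarrow> bool) \<Rightarrow> 'v list \<Rightarrow> bool" where
  "is_cycle V adj p \<longleftrightarrow> length p \<ge> 3 \<and> distinct p \<and> set p \<subseteq> V \<and>
     (\<forall>k. Suc k < length p \<longrightarrow> adj (p ! k) (p ! Suc k)) \<and> adj (last p) (hd p)"

definition finite_tree :: "'v set \<Rightarrow> ('v \<Rightarrow> 'v \<Rightarrow> bool) \<Rightarrow> bool" where
  "finite_tree V adj \<longleftrightarrow> finite V \<and> V \<noteq> {} \<and>
     (\<forall>i j. adj i j \<longrightarrow> i \<in> V \<and> j \<in> V) \<and>
     (\<forall>i j. adj i j \<longrightarrow> adj j i) \<and> (\<forall>i. \<not> adj i i) \<and>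
     (\<forall>i\<in>V. \<forall>j\<in>V. adj\<^sup>*\<^sup>* i j) \<and>
     (\<nexists>p. is_cycle V adj p)"

text \<open>Orientations of I (elements of Quiv(I)): a set of arrows (a,b) meaning a \<rightarrow> b,
  containing exactly one orientation of each edge.\<close>

definition orientation :: "('v \<Rightarrow> 'v \<Rightarrow> bool) \<Rightarrow> ('v \<times> 'v) set \<Rightarrow> bool" where
  "orientation adj G \<longleftrightarrow> (\<forall>a b. (a, b) \<in> G \<longrightarrow> adj a b) \<and>
     (\<forall>a b. adj a b \<longrightarrow> ((a, b) \<in> G \<longleftrightarrow> (b, a) \<notin> G))"

definition is_source :: "'v set \<Rightarrow> ('v \<times> 'v) set \<Rightarrow> 'v \<Rightarrow> bool" where
  "is_source V G i \<longleftrightarrow> i \<in> V \<and> (\<forall>j. (j, i) \<notin> G)"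

definition is_sink :: "'v set \<Rightarrow> ('v \<times> 'v) set \<Rightarrow> 'v \<Rightarrow> bool" where
  "is_sink V G i \<longleftrightarrow> i \<in> V \<and> (\<forall>j. (i, j) \<notin> G)"

definition reflect :: "'v \<Rightarrow> ('v \<times> 'v) set \<Rightarrow> ('v \<times> 'v) set" where
  "reflect i G = {(a, b). ((a, b) \<in> G \<and> a \<noteq> i \<and> b \<noteq> i) \<or> ((b, a) \<in> G \<and> (a = i \<or> b = i))}"

fun run :: "'v set \<Rightarrow> ('v \<times> 'v) set \<Rightarrow> 'v list \<Rightarrow> ('v \<times> 'v) set option" where
  "run V G [] = Some G"
| "run V G (i # is) =
     (if is_source V G i \<or> is_sink V G i then run V (reflect i G) is else None)"

text \<open>A word [i_1,...,i_r] denotes the expression \<Sigma>_{i_1} ... \<Sigma>_{i_r}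
  (composition right to left, so i_r is applied first). It is an expression
  starting at G iff it is composable.\<close>
definition composable :: "'v set \<Rightarrow> ('v \<times> 'v) set \<Rightarrow> 'v list \<Rightarrow> bool" where
  "composable V G w \<longleftrightarrow> run V G (rev w) \<noteq> None"

inductive rel_step :: "'v set \<Rightarrow> ('v \<Rightarrow> 'v \<Rightarrow> bool) \<Rightarrow> ('v \<times> 'v) set \<Rightarrow> 'v list \<Rightarrow> 'v list \<Rightarrow> bool"
  for V adj G where
  R1: "composable V G (u @ [i, i] @ v) \<Longrightarrow> composable V G (u @ v) \<Longrightarrow>
         rel_step V adj G (u @ [i, i] @ v) (u @ v)"
| R2: "\<not> adj i j \<Longrightarrow> composable V G (u @ [i, j] @ v) \<Longrightarrow> composable V G (u @ [j, i] @ v) \<Longrightarrow>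
         rel_step V adj G (u @ [i, j] @ v) (u @ [j, i] @ v)"

definition same_morphism :: "'v set \<Rightarrow> ('v \<Rightarrow> 'v \<Rightarrow> bool) \<Rightarrow> ('v \<times> 'v) set \<Rightarrow> 'v list \<Rightarrow> 'v list \<Rightarrow> bool" where
  "same_morphism V adj G = (\<lambda>x y. rel_step V adj G x y \<or> rel_step V adj G y x)\<^sup>*\<^sup>*"

definition reduced :: "'v set \<Rightarrow> ('v \<Rightarrow> 'v \<Rightarrow> bool) \<Rightarrow> ('v \<times> 'v) set \<Rightarrow> 'v list \<Rightarrow> bool" where
  "reduced V adj G w \<longleftrightarrow> composable V G w \<and>
     (\<forall>w'. composable V G w' \<longrightarrow> same_morphism V adj G w w' \<longrightarrow> length w \<le> length w')"

end

theory Submission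
  imports Defs "HOL-Library.Multiset"
begin

definition proj :: "'v list \<Rightarrow> 'v \<Rightarrow> 'v \<Rightarrow> 'v list" where
  "proj w a b = filter (\<lambda>x. x = a \<or> x = b) w"
definition star :: "('v \<Rightarrow> 'v \<Rightarrow> bool) \<Rightarrow> 'v \<Rightarrow> 'v \<Rightarrow> bool" where
  "star adj c x = (x = c \<or> adj c x)"
definition exposed :: "('v \<Rightarrow> 'v \<Rightarrow> bool) \<Rightarrow> 'v \<Rightarrow> 'v list \<Rightarrow> bool" where
  "exposed adj s w = (proj w s s \<noteq> [] \<and> (\<forall>b. adj s b \<longrightarrow> hd (proj w s b) = s))"
definition act :: "('v \<Rightarrow> 'v \<Rightarrow> bool) \<Rightarrow> 'v \<Rightarrow> 'v list \<Rightarrow> 'v list" where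
  "act adj s w = (if exposed adj s w then remove1 s w else s # w)"
definition eqv :: "('v \<Rightarrow> 'v \<Rightarrow> bool) \<Rightarrow> 'v list \<Rightarrow> 'v list \<Rightarrow> bool" where
  "eqv adj w w' = (\<forall>a b. (a = b \<or> adj a b) \<longrightarrow> proj w a b = proj w' a b)"
fun nocc :: "'v \<Rightarrow> 'v list \<Rightarrow> bool" where
  "nocc c [] = True"
| "nocc c [x] = True"
| "nocc c (x # y # l) = (\<not> (x = c \<and> y = c) \<and> nocc c (y # l))"
definition fgood :: "('v \<Rightarrow> 'v \<Rightarrow> bool) \<Rightarrow> 'v list \<Rightarrow> bool" where
  "fgood adj w = (\<forall>c. nocc c (filter (star adj c) w))"

lemma proj_remove1: "proj (remove1 s w) a b = (if s = a \<or> s = b then remove1 s (proj w a b) else proj w a b)"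
  unfolding proj_def by (induct w) auto

lemma proj_Cons: "proj (s # w) a b = (if s = a \<or> s = b then s # proj w a b else proj w a b)"
  unfolding proj_def by auto

lemma proj_sym: "proj w a b = proj w b a"
  unfolding proj_def by (induct w) auto

lemma nocc_Cons_ne: "x \<noteq> c \<Longrightarrow> nocc c (x # l) = nocc c l"
  by (cases l) auto

lemma nocc_tl: "nocc c (x # l) \<Longrightarrow> nocc c l"
  by (cases l) auto

lemma nocc_append2: "nocc c (A @ B) \<Longrightarrow> nocc c B"
  by (induct A) (auto dest: nocc_tl)

lemma nocc_mid: "c \<notin> set M \<Longrightarrow> nocc c (M @ s # L) \<Longrightarrow> nocc c (M @ L)"
  by (induct M) (auto simp: nocc_Cons_ne dest: nocc_tl)

lemma nocc_bad: "\<not> nocc c (A @ c # c # B)"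
  using nocc_append2[of c A "c # c # B"] by auto

lemma nocc_Cons_c: "nocc c L \<Longrightarrow> (L = [] \<or> hd L \<noteq> c) \<Longrightarrow> nocc c (c # L)"
  by (cases L) auto

lemma not_nocc: "\<not> nocc c l \<Longrightarrow> \<exists>A B. l = A @ c # c # B"
proof (induct c l rule: nocc.induct)
  case (3 c x y l)
  show ?case
  proof (cases "x = c \<and> y = c")
    case True then show ?thesis by (rule_tac x="[]" in exI) auto
  next
    case False
    with 3 obtain A B where "y # l = A @ c # c # B" by auto
    then show ?thesis by (rule_tac x="x # A" in exI) auto
  qed
qed auto

lemma filter_eq_appendD: "filter P w = A @ x # B \<Longrightarrow> \<exists>X Y. w = X @ x # Y \<and> filter P X = A \<and> filter P Y = B \<and> P x"
proof (induct w arbitrary: A)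
  case Nil then show ?case by simp
next
  case (Cons a w)
  show ?case
  proof (cases "P a")
    case False
    with Cons obtain X Y where "w = X @ x # Y \<and> filter P X = A \<and> filter P Y = B \<and> P x" by auto
    with False show ?thesis by (rule_tac x="a # X" in exI) auto
  next
    case True
    show ?thesis
    proof (cases A)
      case Nil with Cons True show ?thesis by (rule_tac x="[]" in exI) auto
    next
      case (Cons a' A')
      with Cons.prems True have "filter P w = A' @ x # B" by auto
      with Cons.hyps obtain X Y where "w = X @ x # Y \<and> filter P X = A' \<and> filter P Y = B \<and> P x" by blast
      with True \<open>A = a' # A'\<close> Cons.prems show ?thesis by (rule_tac x="a # X" in exI) auto
    qed
  qed
qed

lemma exposed_iff: "exposed adj s w \<longleftrightarrow> (\<exists>L. filter (star adj s) w = s # L)"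
proof
  assume e: "exposed adj s w"
  then have "filter (star adj s) w \<noteq> []" unfolding exposed_def proj_def star_def
    by (metis (mono_tags, lifting) filter_False filter_empty_conv)
  then obtain x L where xL: "filter (star adj s) w = x # L" by (cases "filter (star adj s) w") auto
  then obtain us vs where w: "w = us @ x # vs" "\<forall>u\<in>set us. \<not> star adj s u" "star adj s x"
    by (auto simp: filter_eq_Cons_iff)
  show "\<exists>L. filter (star adj s) w = s # L"
  proof (cases "x = s")
    case True with xL show ?thesis by auto
  next
    case False
    with w have a: "adj s x" by (auto simp: star_def)
    have "proj w s x = x # proj vs s x" using w unfolding proj_def star_def
      by (auto simp: filter_empty_conv)
    with e a False show ?thesis unfolding exposed_def by auto
  qed
next
  assume "\<exists>L. filter (star adj s) w = s # L"
  then obtain us vs where w: "w = us @ s # vs" "\<forall>u\<in>set us. \<not> star adj s u"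
    by (auto simp: filter_eq_Cons_iff)
  have "\<And>b. star adj s b \<Longrightarrow> proj w s b = s # proj vs s b" using w unfolding proj_def star_def
    by (auto simp: filter_empty_conv)
  then show "exposed adj s w" unfolding exposed_def star_def by auto
qed

lemma exposed_proj: "exposed adj s w \<Longrightarrow> star adj s b \<Longrightarrow> \<exists>t. proj w s b = s # t"
proof -
  assume "exposed adj s w" "star adj s b"
  then obtain us vs where w: "w = us @ s # vs" "\<forall>u\<in>set us. \<not> star adj s u"
    by (auto simp: filter_eq_Cons_iff exposed_iff)
  then have "proj w s b = s # proj vs s b" using \<open>star adj s b\<close> unfolding proj_def star_def
    by (auto simp: filter_empty_conv)
  then show ?thesis by blast
qed

lemma act_inv:
  assumes sym: "\<forall>a b. adj a b \<longrightarrow> adj b a" and g: "fgood adj w"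
  shows "eqv adj (act adj s (act adj s w)) w"
proof (cases "exposed adj s w")
  case True
  then obtain L where L: "filter (star adj s) w = s # L" by (auto simp: exposed_iff)
  have ne: "\<not> exposed adj s (remove1 s w)"
  proof
    assume "exposed adj s (remove1 s w)"
    then obtain L' where "filter (star adj s) (remove1 s w) = s # L'" by (auto simp: exposed_iff)
    then have "L = s # L'" using L by (simp add: filter_remove1)
    with g L show False unfolding fgood_def by (metis nocc.simps(3))
  qed
  have eq: "act adj s (act adj s w) = s # remove1 s w" using True ne by (simp add: act_def)
  show ?thesis unfolding eqv_def
  proof (intro allI impI)
    fix a b assume d: "a = b \<or> adj a b"
    show "proj (act adj s (act adj s w)) a b = proj w a b"
    proof (cases "s = a \<or> s = b")
      case True
      have "(star adj s b \<and> proj w a b = proj w s b) \<or> (star adj s a \<and> proj w a b = proj w s a)"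
      proof (cases "s = a")
        case True then show ?thesis using d unfolding star_def by auto
      next
        case False then have "s = b" using \<open>s = a \<or> s = b\<close> by auto
        then show ?thesis using d sym proj_sym[of w a b] unfolding star_def by auto
      qed
      then obtain t where "proj w a b = s # t" using exposed_proj[OF \<open>exposed adj s w\<close>] by metis
      then show ?thesis using eq True by (simp add: proj_Cons proj_remove1)
    next
      case False then show ?thesis using eq by (simp add: proj_Cons proj_remove1)
    qed
  qed
next
  case False
  then have "act adj s w = s # w" by (simp add: act_def)
  moreover have "exposed adj s (s # w)" by (simp add: exposed_iff star_def)
  ultimately show ?thesis by (simp add: act_def eqv_def)
qed

lemma exposed_indep:
  assumes "t \<noteq> s" "\<not> adj s t"
  shows "exposed adj s (act adj t w) = exposed adj s w"
proof -
  have "\<And>b. b = s \<or> adj s b \<Longrightarrow> proj (act adj t w) s b = proj w s b"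
    using assms by (auto simp: act_def proj_Cons proj_remove1)
  then show ?thesis unfolding exposed_def by auto
qed

lemma proj_act: "proj (act adj s w) a b = (if s = a \<or> s = b then (if exposed adj s w then remove1 s (proj w a b) else s # proj w a b) else proj w a b)"
  by (simp add: act_def proj_Cons proj_remove1)

lemma act_comm:
  assumes sym: "\<forall>a b. adj a b \<longrightarrow> adj b a" and st: "s \<noteq> t" "\<not> adj s t"
  shows "eqv adj (act adj s (act adj t w)) (act adj t (act adj s w))"
proof -
  have nts: "\<not> adj t s" using sym st by blast
  have e1: "exposed adj s (act adj t w) = exposed adj s w" using exposed_indep st by metis
  have e2: "exposed adj t (act adj s w) = exposed adj t w" using exposed_indep st nts by metis
  show ?thesis unfolding eqv_def
  proof (intro allI impI)
    fix a b assume d: "a = b \<or> adj a b"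
    have nb: "\<not> ((s = a \<or> s = b) \<and> (t = a \<or> t = b))" using d st nts by auto
    show "proj (act adj s (act adj t w)) a b = proj (act adj t (act adj s w)) a b"
    proof (cases "s = a \<or> s = b")
      case True
      then have "\<not> (t = a \<or> t = b)" using nb by blast
      then show ?thesis using True by (simp only: proj_act e1 if_True if_False)
    next
      case False
      then show ?thesis by (simp only: proj_act e2 if_True if_False)
    qed
  qed
qed

lemma act_resp:
  assumes "eqv adj w w'"
  shows "eqv adj (act adj s w) (act adj s w')"
proof -
  have "exposed adj s w = exposed adj s w'" using assms unfolding exposed_def eqv_def by auto
  then show ?thesis using assms unfolding eqv_def act_def by (auto simp: proj_Cons proj_remove1)
qed

lemma act_good:
  assumes sym: "\<forall>a b. adj a b \<longrightarrow> adj b a" and g: "fgood adj w"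
  shows "fgood adj (act adj s w)"
proof (cases "exposed adj s w")
  case True
  then obtain us vs where w: "w = us @ s # vs" "\<forall>u\<in>set us. \<not> star adj s u"
    by (auto simp: filter_eq_Cons_iff exposed_iff)
  have "nocc c (filter (star adj c) (remove1 s w))" for c
  proof -
    have n: "nocc c (filter (star adj c) w)" using g fgood_def by metis
    show ?thesis
    proof (cases "star adj c s")
      case False
      then show ?thesis using n by (simp add: filter_remove1 remove1_idem)
    next
      case True
      show ?thesis
      proof (cases "s = c")
        case True
        then obtain L where "filter (star adj c) w = c # L" using \<open>exposed adj s w\<close> by (auto simp: exposed_iff)
        then show ?thesis using n True by (simp add: filter_remove1 nocc_tl)
      next
        case False
        then have "star adj s c" using True sym unfolding star_def by blast
        then have cus: "c \<notin> set (filter (star adj c) us)" "s \<notin> set us" using w unfolding star_def by auto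
        have "filter (star adj c) w = filter (star adj c) us @ s # filter (star adj c) vs" using w True by simp
        moreover have "filter (star adj c) (remove1 s w) = filter (star adj c) us @ filter (star adj c) vs"
          using w cus by (simp add: remove1_append)
        ultimately show ?thesis using n nocc_mid cus by metis
      qed
    qed
  qed
  then show ?thesis using True by (simp add: act_def fgood_def)
next
  case False
  have "nocc c (filter (star adj c) (s # w))" for c
  proof -
    have n: "nocc c (filter (star adj c) w)" using g fgood_def by metis
    show ?thesis
    proof (cases "s = c")
      case True
      have "filter (star adj c) w = [] \<or> hd (filter (star adj c) w) \<noteq> c"
      proof (rule ccontr)
        assume "\<not> ?thesis"
        then have "\<exists>L. filter (star adj c) w = c # L" by (metis list.collapse)
        then show False using False True by (simp add: exposed_iff)
      qed
      then show ?thesis using n True nocc_Cons_c by (simp add: star_def)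
    next
      case False then show ?thesis using n by (simp add: nocc_Cons_ne)
    qed
  qed
  then show ?thesis using False by (simp add: act_def fgood_def)
qed

definition fw :: "('v \<Rightarrow> 'v \<Rightarrow> bool) \<Rightarrow> 'v list \<Rightarrow> 'v list" where
  "fw adj u = foldr (act adj) u []"

lemma fw_good: assumes sym: "\<forall>a b. adj a b \<longrightarrow> adj b a" shows "fgood adj (fw adj u)"
proof (induct u)
  case Nil then show ?case by (simp add: fw_def fgood_def)
next
  case (Cons a u)
  have "fw adj (a # u) = act adj a (fw adj u)" by (simp add: fw_def)
  then show ?case using act_good[OF sym Cons] by simp
qed

lemma act_len: "length (act adj s w) \<le> Suc (length w)"
  unfolding act_def by (auto simp: length_remove1)

lemma fw_len: "length (fw adj u) \<le> length u"
proof (induct u)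
  case Nil then show ?case by (simp add: fw_def)
next
  case (Cons a u)
  have "fw adj (a # u) = act adj a (fw adj u)" by (simp add: fw_def)
  then show ?case using act_len[of adj a "fw adj u"] Cons by simp
qed

lemma proj_aa: "proj w a a = filter ((=) a) w"
  unfolding proj_def by (induct w) auto

lemma eqv_len: "eqv adj w w' \<Longrightarrow> length w = length w'"
proof -
  assume "eqv adj w w'"
  then have "\<And>a. filter ((=) a) w = filter ((=) a) w'" unfolding eqv_def by (simp add: proj_aa[symmetric])
  then have "mset w = mset w'" by (simp add: multiset_eq_iff count_mset count_list_eq_length_filter)
  then show ?thesis by (metis size_mset)
qed

lemma foldr_resp: "eqv adj x y \<Longrightarrow> eqv adj (foldr (act adj) u x) (foldr (act adj) u y)"
  by (induct u) (auto simp: act_resp)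

lemma fw_good_id:
  assumes sym: "\<forall>a b. adj a b \<longrightarrow> adj b a" shows "fgood adj w \<Longrightarrow> fw adj w = w"
proof (induct w)
  case Nil then show ?case by (simp add: fw_def)
next
  case (Cons i rest)
  have gr: "fgood adj rest" unfolding fgood_def
  proof
    fix c
    have "nocc c (filter (star adj c) (i # rest))" using Cons.prems unfolding fgood_def by blast
    then show "nocc c (filter (star adj c) rest)" by (cases "star adj c i") (auto dest: nocc_tl)
  qed
  have ne: "\<not> exposed adj i rest"
  proof
    assume "exposed adj i rest"
    then obtain L where L: "filter (star adj i) rest = i # L" by (auto simp: exposed_iff)
    have "star adj i i" by (simp add: star_def)
    then have "filter (star adj i) (i # rest) = i # i # L" using L by simp
    moreover have "nocc i (filter (star adj i) (i # rest))" using Cons.prems unfolding fgood_def by blast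
    ultimately show False by simp
  qed
  show ?case using Cons gr ne by (simp add: fw_def act_def)
qed

lemma eqv_refl: "eqv adj w w" by (simp add: eqv_def)
lemma eqv_sym: "eqv adj w w' \<Longrightarrow> eqv adj w' w" by (simp add: eqv_def)
lemma eqv_trans: "eqv adj w w' \<Longrightarrow> eqv adj w' w'' \<Longrightarrow> eqv adj w w''" by (simp add: eqv_def)

lemma step_eqv:
  assumes sym: "\<forall>a b. adj a b \<longrightarrow> adj b a" and st: "rel_step V adj G x y"
  shows "eqv adj (fw adj x) (fw adj y)"
  using st
proof cases
  case (R1 u i v)
  have "eqv adj (act adj i (act adj i (fw adj v))) (fw adj v)" using act_inv[OF sym fw_good[OF sym]] by blast
  then show ?thesis using R1 foldr_resp by (simp add: fw_def)
next
  case (R2 i j u v)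
  show ?thesis
  proof (cases "i = j")
    case True then show ?thesis using R2 eqv_refl by simp
  next
    case False
    have "eqv adj (act adj i (act adj j (fw adj v))) (act adj j (act adj i (fw adj v)))"
      using act_comm[OF sym False \<open>\<not> adj i j\<close>] by blast
    then show ?thesis using R2 foldr_resp by (simp add: fw_def)
  qed
qed

lemma sm_eqv:
  assumes sym: "\<forall>a b. adj a b \<longrightarrow> adj b a" and sm: "same_morphism V adj G x y"
  shows "eqv adj (fw adj x) (fw adj y)"
  using sm unfolding same_morphism_def
proof (induct rule: rtranclp_induct)
  case base then show ?case by (rule eqv_refl)
next
  case (step y z)
  from step.hyps(2) have "eqv adj (fw adj y) (fw adj z)" using step_eqv[OF sym] eqv_sym by blast
  then show ?case using step.hyps(3) eqv_trans by blast
qed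

lemma good_reduced_len:
  assumes sym: "\<forall>a b. adj a b \<longrightarrow> adj b a" and g: "fgood adj w" and sm: "same_morphism V adj G w w'"
  shows "length w \<le> length w'"
proof -
  have e: "eqv adj (fw adj w) (fw adj w')" by (rule sm_eqv[OF sym sm])
  have "fw adj w = w" by (rule fw_good_id[OF sym g])
  then have "eqv adj w (fw adj w')" using e by simp
  then have "length w = length (fw adj w')" by (rule eqv_len)
  then show ?thesis using fw_len[of adj w'] by simp
qed


definition okr :: "('v \<Rightarrow> 'v \<Rightarrow> bool) \<Rightarrow> ('v \<times> 'v) set \<Rightarrow> bool" where
  "okr adj H = (\<forall>a b. (a, b) \<in> H \<longrightarrow> adj a b)"

lemma run_append: "run V G (xs @ ys) = (case run V G xs of None \<Rightarrow> None | Some H \<Rightarrow> run V H ys)"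
  by (induct xs arbitrary: G) auto

lemma okr_reflect: "\<forall>a b. adj a b \<longrightarrow> adj b a \<Longrightarrow> okr adj H \<Longrightarrow> okr adj (reflect i H)"
  unfolding okr_def reflect_def by auto

lemma run_okr: "\<forall>a b. adj a b \<longrightarrow> adj b a \<Longrightarrow> okr adj H \<Longrightarrow> run V H xs = Some H' \<Longrightarrow> okr adj H'"
proof (induct xs arbitrary: H)
  case Nil then show ?case by simp
next
  case (Cons a xs)
  from Cons.prems(3) have r: "run V (reflect a H) xs = Some H'" by (auto split: if_splits)
  show ?case using Cons.hyps[OF Cons.prems(1) okr_reflect[OF Cons.prems(1,2)] r] .
qed

lemma reflect_twice: "reflect c (reflect c H) = H"
  unfolding reflect_def by auto

lemma run_cc: "run V H (c # c # xs) = (if is_source V H c \<or> is_sink V H c then run V H xs else None)"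
proof -
  have "is_source V H c \<or> is_sink V H c \<Longrightarrow> is_source V (reflect c H) c \<or> is_sink V (reflect c H) c"
    unfolding is_source_def is_sink_def reflect_def by auto
  then show ?thesis by (auto simp: reflect_twice)
qed

lemma run_swap:
  assumes "okr adj H" "a \<noteq> b" "\<not> adj a b" "\<not> adj b a"
  shows "run V H (a # b # xs) = run V H (b # a # xs)"
proof -
  have s1: "is_source V (reflect b H) a = is_source V H a" "is_sink V (reflect b H) a = is_sink V H a"
    "is_source V (reflect a H) b = is_source V H b" "is_sink V (reflect a H) b = is_sink V H b"
    using assms unfolding okr_def is_source_def is_sink_def reflect_def by auto
  have s2: "reflect a (reflect b H) = reflect b (reflect a H)"
    using assms unfolding okr_def reflect_def by auto
  have e1: "run V H (a # b # xs) = (if (is_source V H a \<or> is_sink V H a) \<and> (is_source V H b \<or> is_sink V H b) then run V (reflect b (reflect a H)) xs else None)"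
    using s1 by simp
  have e2: "run V H (b # a # xs) = (if (is_source V H a \<or> is_sink V H a) \<and> (is_source V H b \<or> is_sink V H b) then run V (reflect a (reflect b H)) xs else None)"
    using s1 by simp
  show ?thesis using e1 e2 s2 by simp
qed

lemma comp_swap:
  assumes sym: "\<forall>a b. adj a b \<longrightarrow> adj b a" and "okr adj G" "a \<noteq> b" "\<not> adj a b"
  shows "run V G (rev (u @ [a, b] @ v)) = run V G (rev (u @ [b, a] @ v))"
proof -
  have nba: "\<not> adj b a" using assms by blast
  show ?thesis
  proof (cases "run V G (rev v)")
    case None then show ?thesis by (simp add: run_append)
  next
    case (Some H)
    then have "okr adj H" using run_okr[OF sym \<open>okr adj G\<close>] by blast
    then have "run V H (b # a # rev u) = run V H (a # b # rev u)" using run_swap assms nba by metis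
    then show ?thesis using Some by (simp add: run_append)
  qed
qed

lemma comp_cc:
  "run V G (rev (X @ [c, c] @ R)) \<noteq> None \<Longrightarrow> run V G (rev (X @ R)) = run V G (rev (X @ [c, c] @ R))"
  by (cases "run V G (rev R)") (auto simp: run_append run_cc reflect_twice)

lemma decomp_idx:
  assumes "w = X @ c # Y @ c # Z" "length X < r" "r < Suc (length X + length Y)"
  shows "w ! r \<in> set Y"
proof -
  define k where "k = r - Suc (length X)"
  have k: "r = Suc (length X + k)" "k < length Y" using assms(2,3) unfolding k_def by arith+
  have "w ! r = Y ! k" using assms(1) k by (simp add: nth_append)
  then show ?thesis using k by simp
qed

lemma decomp_idx2:
  assumes "w = X @ c # Y @ c # Z"
  shows "w ! length X = c" "w ! Suc (length X + length Y) = c" "Suc (length X + length Y) < length w"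
  using assms by (auto simp: nth_append)

lemma nf_decomp:
  assumes "\<not> fgood adj w"
  shows "\<exists>c X Y Z. w = X @ c # Y @ c # Z \<and> (\<forall>y\<in>set Y. \<not> star adj c y)"
proof -
  obtain c where nc: "\<not> nocc c (filter (star adj c) w)" using assms unfolding fgood_def by blast
  from not_nocc[OF nc] obtain A B where AB: "filter (star adj c) w = A @ c # (c # B)" by (elim exE)
  obtain X W where XW: "w = X @ c # W" "filter (star adj c) W = c # B"
    using filter_eq_appendD[OF AB] by blast
  from XW(2) obtain us vs where W: "W = us @ c # vs" and us: "\<forall>u\<in>set us. \<not> star adj c u"
    unfolding filter_eq_Cons_iff by blast
  have "w = X @ c # us @ c # vs" using XW(1) W by simp
  then show ?thesis using us by (intro exI[of _ c] exI[of _ X] exI[of _ us] exI[of _ vs]) simp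
qed

lemma split_idx:
  assumes "p < q" "q < length w"
  shows "w = take p w @ w ! p # take (q - Suc p) (drop (Suc p) w) @ w ! q # drop (Suc q) w"
proof -
  define Y where "Y = take (q - Suc p) (drop (Suc p) w)"
  have a: "drop (Suc p) w = Y @ drop (q - Suc p) (drop (Suc p) w)" unfolding Y_def by (simp only: append_take_drop_id)
  have b: "drop (q - Suc p) (drop (Suc p) w) = drop q w" using assms by simp
  have c: "drop q w = w ! q # drop (Suc q) w" using assms by (simp add: Cons_nth_drop_Suc)
  have D0: "drop (Suc p) w = Y @ drop q w" using a by (simp only: b)
  have D: "drop (Suc p) w = Y @ w ! q # drop (Suc q) w" using D0 by (simp only: c)
  have E0: "drop p w = w ! p # drop (Suc p) w" using assms by (simp add: Cons_nth_drop_Suc)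
  have E: "drop p w = w ! p # Y @ w ! q # drop (Suc q) w" using E0 by (simp only: D)
  have F: "take p w @ drop p w = take p w @ w ! p # Y @ w ! q # drop (Suc q) w" by (simp only: E)
  show ?thesis unfolding Y_def[symmetric] by (rule trans[OF append_take_drop_id[of p w, symmetric] F])
qed

lemma idx_notf:
  assumes sym: "\<forall>a b. adj a b \<longrightarrow> adj b a" and pq: "p < q" "q < length w" "w ! p = w ! q"
    and nr: "\<forall>r. p < r \<and> r < q \<longrightarrow> \<not> adj (w ! r) (w ! p)"
  shows "\<not> fgood adj w"
proof
  assume g: "fgood adj w"
  define c where "c = w ! p"
  define Y where "Y = take (q - Suc p) (drop (Suc p) w)"
  have s: "w = take p w @ w ! p # Y @ w ! q # drop (Suc q) w" using split_idx[OF pq(1,2)] unfolding Y_def .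
  have w: "w = take p w @ c # Y @ c # drop (Suc q) w" using s unfolding c_def pq(3)[symmetric] .
  have Yc: "\<forall>y\<in>set Y. star adj c y \<longrightarrow> y = c"
  proof
    fix y assume "y \<in> set Y"
    then obtain k where k: "k < length Y" "Y ! k = y" by (auto simp: in_set_conv_nth)
    then have "y = w ! (Suc p + k)" "p < Suc p + k" "Suc p + k < q" using pq unfolding Y_def by auto
    then have "\<not> adj y c" using nr unfolding c_def by auto
    then show "star adj c y \<longrightarrow> y = c" using sym unfolding star_def by blast
  qed
  define FY where "FY = filter (star adj c) Y"
  have FYc: "\<forall>y\<in>set FY. y = c" using Yc unfolding FY_def by auto
  have sc: "star adj c c" by (simp add: star_def)
  have "filter (star adj c) w = filter (star adj c) (take p w @ c # Y @ c # drop (Suc q) w)"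
    by (rule arg_cong[OF w])
  also have "\<dots> = filter (star adj c) (take p w) @ c # FY @ c # filter (star adj c) (drop (Suc q) w)"
    using sc unfolding FY_def by simp
  finally have fe: "filter (star adj c) w = filter (star adj c) (take p w) @ c # FY @ c # filter (star adj c) (drop (Suc q) w)" .
  have nc: "nocc c (filter (star adj c) w)" using g unfolding fgood_def by blast
  show False
  proof (cases FY)
    case Nil then show False using nc fe by (simp add: nocc_bad)
  next
    case (Cons a FY')
    then have "a = c" using FYc by auto
    then show False using nc fe Cons by (simp add: nocc_bad)
  qed
qed

lemma move:
  assumes sym: "\<forall>a b. adj a b \<longrightarrow> adj b a" and ok: "okr adj G"
  shows "\<forall>y\<in>set Y. y \<noteq> c \<and> \<not> adj y c \<Longrightarrow> composable V G (X @ c # Y @ c # Z) \<Longrightarrow>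
     same_morphism V adj G (X @ c # Y @ c # Z) (X @ c # c # Y @ Z) \<and> composable V G (X @ c # c # Y @ Z)"
proof (induct Y arbitrary: Z rule: rev_induct)
  case Nil then show ?case by (simp add: same_morphism_def)
next
  case (snoc y Y')
  have yc: "y \<noteq> c" "\<not> adj y c" using snoc.prems by auto
  define W0 where "W0 = (X @ c # Y') @ [y, c] @ Z"
  define W1 where "W1 = (X @ c # Y') @ [c, y] @ Z"
  have e0: "X @ c # (Y' @ [y]) @ c # Z = W0" unfolding W0_def by simp
  have c0: "composable V G W0" using snoc.prems e0 by simp
  have "run V G (rev W0) = run V G (rev W1)" unfolding W0_def W1_def by (rule comp_swap[OF sym ok yc])
  then have c1: "composable V G W1" using c0 unfolding composable_def by simp
  have st: "rel_step V adj G W0 W1" unfolding W0_def W1_def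
    by (rule R2) (use yc c0 c1 W0_def W1_def in auto)
  have e1: "W1 = X @ c # Y' @ c # (y # Z)" unfolding W1_def by simp
  have IH: "same_morphism V adj G W1 (X @ c # c # Y' @ y # Z) \<and> composable V G (X @ c # c # Y' @ y # Z)"
    using snoc.hyps[of "y # Z"] snoc.prems c1 e1 by simp
  have sm0: "same_morphism V adj G W0 W1" unfolding same_morphism_def using st by auto
  have "same_morphism V adj G W0 (X @ c # c # Y' @ y # Z)"
    using sm0 IH unfolding same_morphism_def by (meson rtranclp_trans)
  then show ?case using IH e0 by simp
qed

theorem mainTheorem15:
  fixes V :: "'v set" and adj :: "'v \<Rightarrow> 'v \<Rightarrow> bool"
    and G :: "('v \<times> 'v) set" and w :: "'v list"
  assumes "finite_tree V adj"
    and "orientation adj G"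
    and "composable V G w"
  shows "reduced V adj G w \<longleftrightarrow>
    (\<forall>p q. p < q \<and> q < length w \<and> w ! p = w ! q \<longrightarrow>
       (\<exists>r. p < r \<and> r < q \<and> adj (w ! r) (w ! p)))"
proof -
  have sym: "\<forall>a b. adj a b \<longrightarrow> adj b a" using assms(1) unfolding finite_tree_def by blast
  have ok: "okr adj G" using assms(2) unfolding orientation_def okr_def by blast
  show ?thesis
  proof
    assume red: "reduced V adj G w"
    show "\<forall>p q. p < q \<and> q < length w \<and> w ! p = w ! q \<longrightarrow> (\<exists>r. p < r \<and> r < q \<and> adj (w ! r) (w ! p))"
    proof (rule ccontr)
      assume "\<not> ?thesis"
      then obtain p q where "p < q" "q < length w" "w ! p = w ! q" "\<forall>r. p < r \<and> r < q \<longrightarrow> \<not> adj (w ! r) (w ! p)"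
        by blast
      then have "\<not> fgood adj w" using idx_notf[OF sym] by blast
      then obtain c X Y Z where w: "w = X @ c # Y @ c # Z" and Y: "\<forall>y\<in>set Y. \<not> star adj c y"
        using nf_decomp[of adj w] by blast
      have Y': "\<forall>y\<in>set Y. y \<noteq> c \<and> \<not> adj y c" using Y sym unfolding star_def by blast
      have m: "same_morphism V adj G w (X @ c # c # Y @ Z) \<and> composable V G (X @ c # c # Y @ Z)"
        using move[OF sym ok Y'] assms(3) w by simp
      have cc: "composable V G (X @ [c, c] @ (Y @ Z))" using m by simp
      have "run V G (rev (X @ (Y @ Z))) = run V G (rev (X @ [c, c] @ (Y @ Z)))"
        by (rule comp_cc) (use cc in \<open>simp add: composable_def\<close>)
      then have cr: "composable V G (X @ (Y @ Z))" using cc unfolding composable_def by simp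
      have "rel_step V adj G (X @ [c, c] @ (Y @ Z)) (X @ (Y @ Z))" by (rule R1[OF cc cr])
      then have "same_morphism V adj G (X @ c # c # Y @ Z) (X @ Y @ Z)" unfolding same_morphism_def by auto
      then have "same_morphism V adj G w (X @ Y @ Z)" using m unfolding same_morphism_def by (meson rtranclp_trans)
      then have "length w \<le> length (X @ Y @ Z)" using red cr unfolding reduced_def by auto
      then show False using w by simp
    qed
  next
    assume P: "\<forall>p q. p < q \<and> q < length w \<and> w ! p = w ! q \<longrightarrow> (\<exists>r. p < r \<and> r < q \<and> adj (w ! r) (w ! p))"
    have g: "fgood adj w"
    proof (rule ccontr)
      assume "\<not> fgood adj w"
      then obtain c X Y Z where w: "w = X @ c # Y @ c # Z" and Y: "\<forall>y\<in>set Y. \<not> star adj c y"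
        using nf_decomp[of adj w] by blast
      note d = decomp_idx2[OF w]
      have "length X < Suc (length X + length Y) \<and> Suc (length X + length Y) < length w \<and> w ! length X = w ! Suc (length X + length Y)"
        using d by simp
      then obtain r where r: "length X < r" "r < Suc (length X + length Y)" "adj (w ! r) (w ! length X)"
        using P by blast
      then have inY: "w ! r \<in> set Y" using decomp_idx[OF w] by blast
      have "adj (w ! r) c" using r(3) d(1) by simp
      then have "adj c (w ! r)" using sym by blast
      then show False using Y inY unfolding star_def by blast
    qed
    show "reduced V adj G w" unfolding reduced_def
      using assms(3) good_reduced_len[OF sym g] by blast
  qed
qed

end
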